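(* Let $G$ be a graph, $H$ a non-null subgraph of $G$, and let $n_0$ denote the maximum number of vertices in a connected component of $H$. For every independent set $I\subseteq V(G)\setminus V(H)$ of $G$ and every non-negative integer $k$ with $k\leq\alpha(H)-i(H-N(I))$, there exists an independent set $I_1\subseteq I$ with $|I_1|\leq kn_0$ such that $k\leq\alpha(H)-i(H-N(I_1))$.
   Context: All graphs are finite and simple; the null graph is allowed. For a graph $F$, $\alpha(F)$ is the maximum size of an independent set and $i(F)$ the minimum size of an inclusion-maximal independent set (both $0$ for the null graph). $N(I)=\bigcup_{v\in I}N_G(v)$ is the set of neighbors in $G$ of vertices of $I$, and $H-N(I)$ denotes the graph obtained from $H$ by deleting the vertices of $N(I)\cap V(H)$. *)

theory Defs
  imports Main
begin

definition graph :: "'a set \<Rightarrow> ('a \<Rightarrow> 'a \<Rightarrow> bool) \<Rightarrow> bool" where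
  "graph V E \<longleftrightarrow> finite V \<and> (\<forall>x y. E x y \<longrightarrow> x \<in> V \<and> y \<in> V)
     \<and> (\<forall>x y. E x y \<longrightarrow> E y x) \<and> (\<forall>x. \<not> E x x)"

definition subgraph :: "'a set \<Rightarrow> ('a \<Rightarrow> 'a \<Rightarrow> bool) \<Rightarrow> 'a set \<Rightarrow> ('a \<Rightarrow> 'a \<Rightarrow> bool) \<Rightarrow> bool" where
  "subgraph VH EH V E \<longleftrightarrow> graph VH EH \<and> VH \<subseteq> V \<and> (\<forall>x y. EH x y \<longrightarrow> E x y)"

definition indep :: "'a set \<Rightarrow> ('a \<Rightarrow> 'a \<Rightarrow> bool) \<Rightarrow> 'a set \<Rightarrow> bool" where
  "indep V E S \<longleftrightarrow> S \<subseteq> V \<and> (\<forall>x\<in>S. \<forall>y\<in>S. \<not> E x y)"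

definition maximal_indep :: "'a set \<Rightarrow> ('a \<Rightarrow> 'a \<Rightarrow> bool) \<Rightarrow> 'a set \<Rightarrow> bool" where
  "maximal_indep V E S \<longleftrightarrow> indep V E S \<and> (\<forall>T. indep V E T \<and> S \<subseteq> T \<longrightarrow> T = S)"

definition alpha :: "'a set \<Rightarrow> ('a \<Rightarrow> 'a \<Rightarrow> bool) \<Rightarrow> nat" where
  "alpha V E = Max (card ` {S. indep V E S})"

definition indep_dom :: "'a set \<Rightarrow> ('a \<Rightarrow> 'a \<Rightarrow> bool) \<Rightarrow> nat" where
  "indep_dom V E = Min (card ` {S. maximal_indep V E S})"

definition nbhd :: "('a \<Rightarrow> 'a \<Rightarrow> bool) \<Rightarrow> 'a set \<Rightarrow> 'a set" where
  "nbhd E I = {y. \<exists>x\<in>I. E x y}"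

definition del_verts_V :: "'a set \<Rightarrow> 'a set \<Rightarrow> 'a set" where
  "del_verts_V VH X = VH - X"

definition del_verts_E :: "('a \<Rightarrow> 'a \<Rightarrow> bool) \<Rightarrow> 'a set \<Rightarrow> 'a \<Rightarrow> 'a \<Rightarrow> bool" where
  "del_verts_E EH X = (\<lambda>x y. EH x y \<and> x \<notin> X \<and> y \<notin> X)"

definition component :: "'a set \<Rightarrow> ('a \<Rightarrow> 'a \<Rightarrow> bool) \<Rightarrow> 'a \<Rightarrow> 'a set" where
  "component V E v = {u \<in> V. E\<^sup>*\<^sup>* v u}"

definition max_comp_size :: "'a set \<Rightarrow> ('a \<Rightarrow> 'a \<Rightarrow> bool) \<Rightarrow> nat" where
  "max_comp_size V E = Max ((\<lambda>v. card (component V E v)) ` V)"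

end

theory Submission
  imports Defs
begin

lemma extend_maximal:
  assumes "finite V" "indep V E S" shows "\<exists>T. maximal_indep V E T \<and> S \<subseteq> T"
proof -
  let ?A = "{T. indep V E T \<and> S \<subseteq> T}"
  have fin: "finite ?A"
    by (rule finite_subset[of _ "Pow V"]) (use assms(1) in \<open>auto simp: indep_def\<close>)
  have ne: "S \<in> ?A" using assms by auto
  have "Max (card ` ?A) \<in> card ` ?A" using fin ne by (intro Max_in) auto
  then obtain T where T: "T \<in> ?A" "card T = Max (card ` ?A)" by auto
  have "maximal_indep V E T"
    unfolding maximal_indep_def
  proof (intro conjI allI impI)
    show "indep V E T" using T by auto
    fix T' assume h: "indep V E T' \<and> T \<subseteq> T'"
    then have "T' \<in> ?A" using T by auto
    then have "card T' \<le> card T" using T fin by simp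
    moreover have "finite T'" using h assms(1) finite_subset unfolding indep_def by blast
    ultimately show "T' = T" using h card_seteq by blast
  qed
  then show ?thesis using T by auto
qed

lemma alpha_ge:
  assumes "finite V" "indep V E S" shows "card S \<le> alpha V E"
proof -
  have "finite {S. indep V E S}"
    by (rule finite_subset[of _ "Pow V"]) (use assms(1) in \<open>auto simp: indep_def\<close>)
  then show ?thesis unfolding alpha_def using assms(2) by (intro Max_ge) auto
qed

lemma alpha_ex:
  assumes "finite V" shows "\<exists>S. indep V E S \<and> card S = alpha V E"
proof -
  have "finite {S. indep V E S}"
    by (rule finite_subset[of _ "Pow V"]) (use assms(1) in \<open>auto simp: indep_def\<close>)
  moreover have "{} \<in> {S. indep V E S}" by (auto simp: indep_def)
  ultimately have "alpha V E \<in> card ` {S. indep V E S}" unfolding alpha_def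
    by (intro Max_in) auto
  then show ?thesis by auto
qed

lemma idom_le:
  assumes "finite V" "maximal_indep V E S" shows "indep_dom V E \<le> card S"
proof -
  have "finite {S. maximal_indep V E S}"
    by (rule finite_subset[of _ "Pow V"]) (use assms(1) in \<open>auto simp: indep_def maximal_indep_def\<close>)
  then show ?thesis unfolding indep_dom_def using assms(2) by (intro Min_le) auto
qed

lemma idom_ex:
  assumes "finite V" shows "\<exists>S. maximal_indep V E S \<and> card S = indep_dom V E"
proof -
  have "finite {S. maximal_indep V E S}"
    by (rule finite_subset[of _ "Pow V"]) (use assms(1) in \<open>auto simp: indep_def maximal_indep_def\<close>)
  moreover have "{S. maximal_indep V E S} \<noteq> {}"
    using extend_maximal[OF assms, of E "{}"] by (auto simp: indep_def)
  ultimately have "indep_dom V E \<in> card ` {S. maximal_indep V E S}" unfolding indep_dom_def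
    by (intro Min_in) auto
  then show ?thesis by auto
qed

definition closedset :: "'a set \<Rightarrow> ('a \<Rightarrow> 'a \<Rightarrow> bool) \<Rightarrow> 'a set \<Rightarrow> bool" where
  "closedset VH EH W \<longleftrightarrow> W \<subseteq> VH \<and> (\<forall>x y. EH x y \<longrightarrow> x \<in> W \<longrightarrow> y \<in> W)"

lemma comp_sub:
  assumes "closedset VH EH X" "v \<in> X" shows "component VH EH v \<subseteq> X"
proof
  fix u assume "u \<in> component VH EH v"
  then have "EH\<^sup>*\<^sup>* v u" by (simp add: component_def)
  then show "u \<in> X"
    by (induction rule: rtranclp_induct) (use assms in \<open>auto simp: closedset_def\<close>)
qed

lemma comp_closed:
  assumes "graph VH EH" shows "closedset VH EH (component VH EH v)"
  using assms unfolding closedset_def component_def graph_def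
  by (auto intro: rtranclp.rtrancl_into_rtrancl)

lemma comp_card:
  assumes "graph VH EH" "v \<in> VH" shows "card (component VH EH v) \<le> max_comp_size VH EH"
  unfolding max_comp_size_def using assms by (intro Max_ge) (auto simp: graph_def)

lemma closed_diff:
  assumes "graph VH EH" "closedset VH EH X" "closedset VH EH C"
  shows "closedset VH EH (X - C)"
  using assms unfolding closedset_def graph_def by blast

lemma closed_compl:
  assumes "graph VH EH" "closedset VH EH X"
  shows "closedset VH EH (VH - X)"
  using assms unfolding closedset_def graph_def by blast

lemma find_comp:
  assumes "graph VH EH" "finite S" "finite J"
  shows "closedset VH EH X \<Longrightarrow> card (J \<inter> X) < card (S \<inter> X) \<Longrightarrow>
    \<exists>v\<in>X. card (J \<inter> component VH EH v) < card (S \<inter> component VH EH v)"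
proof (induction "card X" arbitrary: X rule: less_induct)
  case less
  have finX: "finite X" using less.prems assms(1) unfolding closedset_def graph_def
    using finite_subset by blast
  have "S \<inter> X \<noteq> {}" using less.prems(2) by (metis card.empty less_nat_zero_code)
  then obtain v where v: "v \<in> X" by blast
  let ?C = "component VH EH v"
  show ?case
  proof (cases "card (J \<inter> ?C) < card (S \<inter> ?C)")
    case True then show ?thesis using v by (rule bexI)
  next
    case False
    have CX: "?C \<subseteq> X" by (rule comp_sub[OF less.prems(1) v])
    have vC: "v \<in> ?C" using v less.prems(1) by (auto simp: component_def closedset_def)
    have cl: "closedset VH EH (X - ?C)"
      using closed_diff[OF assms(1) less.prems(1) comp_closed[OF assms(1)]] .
    have lt: "card (X - ?C) < card X" using finX vC CX by (intro psubset_card_mono) auto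
    have "card (S \<inter> X) = card (S \<inter> ?C) + card (S \<inter> (X - ?C))"
      using CX assms(2) by (subst card_Un_disjoint[symmetric]) (auto intro: arg_cong[where f=card])
    moreover have "card (J \<inter> X) = card (J \<inter> ?C) + card (J \<inter> (X - ?C))"
      using CX assms(3) by (subst card_Un_disjoint[symmetric]) (auto intro: arg_cong[where f=card])
    ultimately have "card (J \<inter> (X - ?C)) < card (S \<inter> (X - ?C))" using False less.prems(2) by linarith
    then show ?thesis using less.hyps[OF lt cl] by auto
  qed
qed


lemma closed_Un:
  assumes "closedset VH EH X" "closedset VH EH C"
  shows "closedset VH EH (X \<union> C)"
  using assms unfolding closedset_def by blast

lemma card_split:
  assumes "finite A" "X \<subseteq> VH" "A \<subseteq> VH"
  shows "card A = card (A \<inter> X) + card (A \<inter> (VH - X))"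
proof -
  have "A = (A \<inter> X) \<union> (A \<inter> (VH - X))" using assms by blast
  then have "card A = card ((A \<inter> X) \<union> (A \<inter> (VH - X)))" by simp
  also have "\<dots> = card (A \<inter> X) + card (A \<inter> (VH - X))"
    using assms(1) by (intro card_Un_disjoint) auto
  finally show ?thesis .
qed

lemma find_W:
  assumes "graph VH EH" "S \<subseteq> VH" "J \<subseteq> VH"
  shows "k + card J \<le> card S \<Longrightarrow> \<exists>W. closedset VH EH W \<and> card W \<le> k * max_comp_size VH EH
     \<and> card (J \<inter> W) + k \<le> card (S \<inter> W)"
proof (induction k)
  case 0
  show ?case by (rule exI[of _ "{}"]) (auto simp: closedset_def)
next
  case (Suc k)
  have finVH: "finite VH" using assms(1) by (simp add: graph_def)
  have finS: "finite S" and finJ: "finite J" using assms finVH finite_subset by blast+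
  from Suc obtain W where W: "closedset VH EH W" "card W \<le> k * max_comp_size VH EH"
     "card (J \<inter> W) + k \<le> card (S \<inter> W)" by auto
  show ?case
  proof (cases "card (J \<inter> W) + Suc k \<le> card (S \<inter> W)")
    case True
    then show ?thesis using W by (intro exI[of _ W]) (auto intro: le_trans)
  next
    case False
    let ?X = "VH - W"
    have WV: "W \<subseteq> VH" using W(1) by (simp add: closedset_def)
    have clX: "closedset VH EH ?X" using closed_compl[OF assms(1) W(1)] .
    have "card S = card (S \<inter> W) + card (S \<inter> ?X)" using card_split[OF finS WV assms(2)] .
    moreover have "card J = card (J \<inter> W) + card (J \<inter> ?X)" using card_split[OF finJ WV assms(3)] .
    ultimately have "card (J \<inter> ?X) < card (S \<inter> ?X)" using False Suc.prems by linarith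
    then obtain v where v: "v \<in> ?X" "card (J \<inter> component VH EH v) < card (S \<inter> component VH EH v)"
      using find_comp[OF assms(1) finS finJ clX] by blast
    let ?C = "component VH EH v"
    have CX: "?C \<subseteq> ?X" using comp_sub[OF clX v(1)] .
    have finC: "finite ?C" using CX finVH finite_subset by blast
    have finW: "finite W" using WV finVH finite_subset by blast
    have cl: "closedset VH EH (W \<union> ?C)" using closed_Un[OF W(1) comp_closed[OF assms(1)]] .
    have "card (W \<union> ?C) \<le> card W + card ?C" by (rule card_Un_le)
    also have "\<dots> \<le> k * max_comp_size VH EH + max_comp_size VH EH"
      using W(2) comp_card[OF assms(1)] v(1) by (intro add_mono) auto
    finally have c1: "card (W \<union> ?C) \<le> Suc k * max_comp_size VH EH" by simp
    have eS: "card (S \<inter> (W \<union> ?C)) = card (S \<inter> W) + card (S \<inter> ?C)"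
    proof -
      have "S \<inter> (W \<union> ?C) = (S \<inter> W) \<union> (S \<inter> ?C)" by blast
      then show ?thesis using CX finW finC by (simp add: card_Un_disjoint[symmetric]) (subst card_Un_disjoint, auto)
    qed
    have eJ: "card (J \<inter> (W \<union> ?C)) = card (J \<inter> W) + card (J \<inter> ?C)"
    proof -
      have "J \<inter> (W \<union> ?C) = (J \<inter> W) \<union> (J \<inter> ?C)" by blast
      then show ?thesis using CX finW finC by (simp add: card_Un_disjoint[symmetric]) (subst card_Un_disjoint, auto)
    qed
    show ?thesis using cl c1 eS eJ W(3) v(2) by (intro exI[of _ "W \<union> ?C"]) auto
  qed
qed


theorem lemma8:
  fixes V VH :: "'a set" and E EH :: "'a \<Rightarrow> 'a \<Rightarrow> bool" and I :: "'a set" and k :: nat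
  assumes "graph V E"
    and "subgraph VH EH V E"
    and "VH \<noteq> {}"
    and "indep V E I" and "I \<subseteq> V - VH"
    and "int k \<le> int (alpha VH EH)
           - int (indep_dom (del_verts_V VH (nbhd E I)) (del_verts_E EH (nbhd E I)))"
  shows "\<exists>I1 \<subseteq> I. card I1 \<le> k * max_comp_size VH EH
           \<and> int k \<le> int (alpha VH EH)
              - int (indep_dom (del_verts_V VH (nbhd E I1)) (del_verts_E EH (nbhd E I1)))"
proof -
  have gH: "graph VH EH" using assms(2) by (simp add: subgraph_def)
  have finVH: "finite VH" using gH by (simp add: graph_def)
  have symH: "\<And>x y. EH x y \<Longrightarrow> EH y x" using gH by (simp add: graph_def)
  obtain S where S: "indep VH EH S" "card S = alpha VH EH" using alpha_ex[OF finVH] by blast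
  let ?N = "nbhd E I"
  obtain J where J: "maximal_indep (del_verts_V VH ?N) (del_verts_E EH ?N) J"
     "card J = indep_dom (del_verts_V VH ?N) (del_verts_E EH ?N)"
    using idom_ex[of "del_verts_V VH ?N"] finVH by (auto simp: del_verts_V_def)
  have JV: "J \<subseteq> VH - ?N" using J(1) by (auto simp: maximal_indep_def indep_def del_verts_V_def)
  have SV: "S \<subseteq> VH" using S(1) by (simp add: indep_def)
  have hk: "k + card J \<le> card S" using assms(6) J(2) S(2) by linarith
  obtain W where W: "closedset VH EH W" "card W \<le> k * max_comp_size VH EH"
     "card (J \<inter> W) + k \<le> card (S \<inter> W)"
    using find_W[OF gH SV, of J k] JV hk by blast
  have WV: "W \<subseteq> VH" using W(1) by (simp add: closedset_def)
  have finW: "finite W" using WV finVH finite_subset by blast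
  define f where "f = (\<lambda>w. SOME x. x \<in> I \<and> E x w)"
  have fP: "f w \<in> I \<and> E (f w) w" if "w \<in> ?N" for w
  proof -
    have "\<exists>x. x \<in> I \<and> E x w" using that by (auto simp: nbhd_def)
    then show ?thesis unfolding f_def by (rule someI_ex)
  qed
  define I1 where "I1 = f ` (W \<inter> ?N)"
  let ?N1 = "nbhd E I1"
  have I1I: "I1 \<subseteq> I" using fP by (auto simp: I1_def)
  have cI1: "card I1 \<le> card W"
    unfolding I1_def using finW by (meson card_image_le card_mono finite_Int inf_le1 le_trans)
  have N1N: "?N1 \<subseteq> ?N" using I1I by (auto simp: nbhd_def)
  have WN: "W \<inter> ?N \<subseteq> ?N1" using fP by (auto simp: nbhd_def I1_def)
  have finV1: "finite (del_verts_V VH ?N1)" using finVH by (simp add: del_verts_V_def)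
  have T0: "indep (del_verts_V VH ?N1) (del_verts_E EH ?N1) (J \<inter> W)"
    using J(1) N1N unfolding maximal_indep_def indep_def del_verts_V_def del_verts_E_def by blast
  obtain T where T: "maximal_indep (del_verts_V VH ?N1) (del_verts_E EH ?N1) T" "J \<inter> W \<subseteq> T"
    using extend_maximal[OF finV1 T0] by blast
  have TV: "T \<subseteq> VH - ?N1" and Tind: "\<And>x y. x \<in> T \<Longrightarrow> y \<in> T \<Longrightarrow> \<not> EH x y"
    using T(1) unfolding maximal_indep_def indep_def del_verts_V_def del_verts_E_def by blast+
  have finT: "finite T" using TV finVH finite_subset by blast
  have TW: "T \<inter> W \<subseteq> J"
  proof
    fix t assume t: "t \<in> T \<inter> W"
    have tN: "t \<notin> ?N" using t TV WN by blast
    show "t \<in> J"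
    proof (rule ccontr)
      assume tJ: "t \<notin> J"
      have "indep (del_verts_V VH ?N) (del_verts_E EH ?N) (insert t J) \<Longrightarrow> False"
        using J(1) tJ unfolding maximal_indep_def by blast
      moreover have "insert t J \<subseteq> del_verts_V VH ?N" using JV t TV tN by (auto simp: del_verts_V_def)
      ultimately obtain x y where xy: "x \<in> insert t J" "y \<in> insert t J" "EH x y"
        unfolding indep_def del_verts_E_def by blast
      have JJ: "\<not> EH x y" if "x \<in> J" "y \<in> J" for x y
        using J(1) JV that unfolding maximal_indep_def indep_def del_verts_E_def by blast
      have irr: "\<not> EH t t" using gH by (simp add: graph_def)
      obtain j where j: "j \<in> J" "EH t j"
        using xy JJ irr symH by auto
      have "j \<in> W" using W(1) j t by (auto simp: closedset_def)
      then have "j \<in> T" using T(2) j by blast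
      then show False using Tind t j by blast
    qed
  qed
  have U: "indep VH EH ((S \<inter> W) \<union> (T - W))"
    unfolding indep_def
  proof (intro conjI ballI)
    show "S \<inter> W \<union> (T - W) \<subseteq> VH" using SV TV by blast
    fix x y assume x: "x \<in> S \<inter> W \<union> (T - W)" and y: "y \<in> S \<inter> W \<union> (T - W)"
    have cw: "\<And>a b. EH a b \<Longrightarrow> a \<in> W \<Longrightarrow> b \<in> W" using W(1) by (simp add: closedset_def)
    show "\<not> EH x y"
      using x y S(1) Tind cw symH unfolding indep_def by blast
  qed
  have finS: "finite S" using SV finVH finite_subset by blast
  have "card ((S \<inter> W) \<union> (T - W)) \<le> card S" using alpha_ge[OF finVH U] S(2) by simp
  moreover have "card ((S \<inter> W) \<union> (T - W)) = card (S \<inter> W) + card (T - W)"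
    using finS finT by (intro card_Un_disjoint) auto
  moreover have "card S = card (S \<inter> W) + card (S \<inter> (VH - W))" using card_split[OF finS WV SV] .
  moreover have "card T = card (T \<inter> W) + card (T - W)"
  proof -
    have "T \<inter> (VH - W) = T - W" using TV by blast
    then show ?thesis using card_split[OF finT WV] TV by auto
  qed
  moreover have "card (T \<inter> W) \<le> card (J \<inter> W)"
    using TW finW by (intro card_mono) auto
  moreover have "indep_dom (del_verts_V VH ?N1) (del_verts_E EH ?N1) \<le> card T"
    using idom_le[OF finV1 T(1)] .
  ultimately have "indep_dom (del_verts_V VH ?N1) (del_verts_E EH ?N1) + k \<le> alpha VH EH"
    using W(3) S(2) by linarith
  then show ?thesis using I1I cI1 W(2) by (intro exI[of _ I1]) auto
qed

end
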